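(* Assume Assumption (I), and let $(L_k,u_k)$ be a sequence generated by Algorithm A. Then \[ \sum_{k=1}^\infty\Big(\frac\alpha2\|u_{k+1}-u_k\|_V^2+\beta\int_\Omega\psi_{\epsilon_k}'(u_k^2)(u_{k+1}-u_k)^2\,dx\Big)<\infty . \]
   Context: Standing assumptions: $\Omega\subset\mathbb R^d$ bounded Lipschitz domain; $V$ real Hilbert space with inner product $\langle\cdot,\cdot\rangle_V$, $V\subset L^2(\Omega)$ with compact and dense embedding; $V^*$ dual. $F:V\to\mathbb R$ weakly lower semicontinuous, bounded below by an affine function, continuously Fréchet differentiable. $\alpha>0$, $\beta>0$, $p\in(0,1)$. Assumption (I): the standing assumptions hold; $F'$ is completely continuous ($u_n\rightharpoonup u$ in $V$ implies $F'(u_n)\to F'(u)$ in $V^*$); and $F':V\to V^*$ is Lipschitz continuous on bounded sets. For $\epsilon>0$, $\psi_\epsilon(t)=\frac p2\frac{t}{\epsilon^{2-p}}+(1-\frac p2)\epsilon^p$ if $t\in[0,\epsilon^2)$, $\psi_\epsilon(t)=t^{p/2}$ if $t\ge\epsilon^2$, $\psi_\epsilon'(t)=\frac p2\min(\epsilon^{p-2},t^{(p-2)/2})$. Algorithm A: choose a monotonically decreasing sequence $\epsilon_k\searrow0$, constants $\gamma>1$, $\tilde L>0$, and $u_0\in V$. Given $u_k$, for $L\ge0$ let problem (Q$_{k,L}$) be $\min_{u\in V} F(u_k)+F'(u_k)(u-u_k)+\frac L2\|u-u_k\|_V^2+\frac\alpha2\|u\|_V^2+\beta\int_\Omega\big[\psi_{\epsilon_k}(u_k^2)+\psi_{\epsilon_k}'(u_k^2)(u^2-u_k^2)\big]dx$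 (strongly convex, unique minimizer), and let (D$_{k,L}$) be the condition $F(u_{k+1})\le F(u_k)+F'(u_k)(u_{k+1}-u_k)+L\|u_{k+1}-u_k\|_V^2$ for its minimizer $u_{k+1}$. $L_k$ is the smallest $L\in\{0\}\cup\{\tilde L\gamma^l:l\ge0\}$ for which (D$_{k,L}$) holds, and $u_{k+1}$ is the corresponding minimizer; then $k\mapsto k+1$. *)

theory Defs
  imports "HOL-Analysis.Analysis"
begin

definition lipschitz_domain :: "'d::euclidean_space set \<Rightarrow> bool" where
  "lipschitz_domain \<Omega> \<longleftrightarrow> \<Omega> \<noteq> {} \<and> open \<Omega> \<and> connected \<Omega> \<and> bounded \<Omega> \<and>
     (\<forall>x\<in>frontier \<Omega>. \<exists>r>0. \<exists>e g M. norm e = 1 \<and> M-lipschitz_on UNIV g \<and>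
        \<Omega> \<inter> ball x r = {y \<in> ball x r. y \<bullet> e < g (y - (y \<bullet> e) *\<^sub>R e)})"

definition square_int :: "'d::euclidean_space set \<Rightarrow> ('d \<Rightarrow> real) \<Rightarrow> bool" where
  "square_int \<Omega> f \<longleftrightarrow> f \<in> borel_measurable (lebesgue_on \<Omega>) \<and>
     integrable (lebesgue_on \<Omega>) (\<lambda>x. (f x)\<^sup>2)"

text \<open>E realises the compact, dense embedding of V into L2(Omega): pointwise representatives,
  linear, injective modulo null sets, compact (bounded sequences have L2-convergent
  subsequences) and with dense image.\<close>
definition compact_dense_embedding ::
  "'d::euclidean_space set \<Rightarrow> ('v::real_normed_vector \<Rightarrow> 'd \<Rightarrow> real) \<Rightarrow> bool" where
  "compact_dense_embedding \<Omega> E \<longleftrightarrow>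
     (\<forall>u. square_int \<Omega> (E u)) \<and>
     (\<forall>a b u v x. E (a *\<^sub>R u + b *\<^sub>R v) x = a * E u x + b * E v x) \<and>
     (\<forall>u. (AE x in lebesgue_on \<Omega>. E u x = 0) \<longrightarrow> u = 0) \<and>
     (\<forall>w::nat \<Rightarrow> 'v. bounded (range w) \<longrightarrow>
        (\<exists>r f. strict_mono r \<and> square_int \<Omega> f \<and>
           (\<lambda>n. integral\<^sup>L (lebesgue_on \<Omega>) (\<lambda>x. (E (w (r n)) x - f x)\<^sup>2)) \<longlonglongrightarrow> 0)) \<and>
     (\<forall>f. square_int \<Omega> f \<longrightarrow>
        (\<forall>e>0. \<exists>u. integral\<^sup>L (lebesgue_on \<Omega>) (\<lambda>x. (E u x - f x)\<^sup>2) < e))"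

definition weakly_conv :: "(nat \<Rightarrow> 'v::real_inner) \<Rightarrow> 'v \<Rightarrow> bool" where
  "weakly_conv u x \<longleftrightarrow> (\<forall>w. (\<lambda>n. inner (u n) w) \<longlonglongrightarrow> inner x w)"

definition assumption_I :: "('v::{real_inner,complete_space} \<Rightarrow> real) \<Rightarrow> ('v \<Rightarrow> ('v \<Rightarrow>\<^sub>L real)) \<Rightarrow> bool" where
  "assumption_I F F' \<longleftrightarrow>
     (\<forall>u x. weakly_conv u x \<longrightarrow> ereal (F x) \<le> liminf (\<lambda>n. ereal (F (u n)))) \<and>
     (\<exists>(lf::'v \<Rightarrow>\<^sub>L real) c. \<forall>u. F u \<ge> blinfun_apply lf u + c) \<and>
     (\<forall>u. (F has_derivative blinfun_apply (F' u)) (at u)) \<and>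
     continuous_on UNIV F' \<and>
     (\<forall>u x. weakly_conv u x \<longrightarrow> (\<lambda>n. F' (u n)) \<longlonglongrightarrow> F' x) \<and>
     (\<forall>B. bounded B \<longrightarrow> (\<exists>M. M-lipschitz_on B F'))"

definition psi :: "real \<Rightarrow> real \<Rightarrow> real \<Rightarrow> real" where
  "psi p \<epsilon> t = (if t < \<epsilon>\<^sup>2 then p / 2 * t / \<epsilon> powr (2 - p) + (1 - p / 2) * \<epsilon> powr p
                  else t powr (p / 2))"

definition dpsi :: "real \<Rightarrow> real \<Rightarrow> real \<Rightarrow> real" where
  "dpsi p \<epsilon> t = p / 2 * (if t < \<epsilon>\<^sup>2 then \<epsilon> powr (p - 2) else t powr ((p - 2) / 2))"

definition Qobj ::
  "'d::euclidean_space set \<Rightarrow> ('v::real_inner \<Rightarrow> 'd \<Rightarrow> real) \<Rightarrow> ('v \<Rightarrow> real) \<Rightarrow> ('v \<Rightarrow> ('v \<Rightarrow>\<^sub>L real))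
    \<Rightarrow> real \<Rightarrow> real \<Rightarrow> real \<Rightarrow> real \<Rightarrow> real \<Rightarrow> 'v \<Rightarrow> 'v \<Rightarrow> real" where
  "Qobj \<Omega> E F F' \<alpha> \<beta> p \<epsilon> L uk u =
     F uk + blinfun_apply (F' uk) (u - uk) + L / 2 * (norm (u - uk))\<^sup>2 + \<alpha> / 2 * (norm u)\<^sup>2
     + \<beta> * integral\<^sup>L (lebesgue_on \<Omega>)
         (\<lambda>x. psi p \<epsilon> ((E uk x)\<^sup>2) + dpsi p \<epsilon> ((E uk x)\<^sup>2) * ((E u x)\<^sup>2 - (E uk x)\<^sup>2))"

definition descent_cond :: "('v::real_normed_vector \<Rightarrow> real) \<Rightarrow> ('v \<Rightarrow> ('v \<Rightarrow>\<^sub>L real)) \<Rightarrow> real \<Rightarrow> 'v \<Rightarrow> 'v \<Rightarrow> bool" where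
  "descent_cond F F' L uk unew \<longleftrightarrow>
     F unew \<le> F uk + blinfun_apply (F' uk) (unew - uk) + L * (norm (unew - uk))\<^sup>2"

definition generated_by_algA ::
  "'d::euclidean_space set \<Rightarrow> ('v::real_inner \<Rightarrow> 'd \<Rightarrow> real) \<Rightarrow> ('v \<Rightarrow> real) \<Rightarrow> ('v \<Rightarrow> ('v \<Rightarrow>\<^sub>L real))
    \<Rightarrow> real \<Rightarrow> real \<Rightarrow> real \<Rightarrow> (nat \<Rightarrow> real) \<Rightarrow> real \<Rightarrow> real \<Rightarrow> (nat \<Rightarrow> real) \<Rightarrow> (nat \<Rightarrow> 'v) \<Rightarrow> bool" where
  "generated_by_algA \<Omega> E F F' \<alpha> \<beta> p eps \<gamma> Lt L u \<longleftrightarrow>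
     decseq eps \<and> (\<forall>k. eps k > 0) \<and> eps \<longlonglongrightarrow> 0 \<and> \<gamma> > 1 \<and> Lt > 0 \<and>
     (\<forall>k. L k \<in> insert 0 (range (\<lambda>l::nat. Lt * \<gamma> ^ l)) \<and>
          (\<forall>v. Qobj \<Omega> E F F' \<alpha> \<beta> p (eps k) (L k) (u k) (u (Suc k))
                \<le> Qobj \<Omega> E F F' \<alpha> \<beta> p (eps k) (L k) (u k) v) \<and>
          descent_cond F F' (L k) (u k) (u (Suc k)) \<and>
          (\<forall>L' \<in> insert 0 (range (\<lambda>l::nat. Lt * \<gamma> ^ l)). L' < L k \<longrightarrow>
             (\<forall>w. (\<forall>v. Qobj \<Omega> E F F' \<alpha> \<beta> p (eps k) L' (u k) w
                       \<le> Qobj \<Omega> E F F' \<alpha> \<beta> p (eps k) L' (u k) v)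
                  \<longrightarrow> \<not> descent_cond F F' L' (u k) w)))"

end

theory Submission
  imports Defs
begin

definition tg :: "real \<Rightarrow> real \<Rightarrow> real \<Rightarrow> real" where
  "tg q r s = (1-q) * r powr q + q * s * r powr (q-1)"

lemma powr_q_split: "(r::real) > 0 \<Longrightarrow> r powr q = r * r powr (q-1)"
proof -
  assume r: "r > 0"
  have "r powr q = r powr (1 + (q-1))" by simp
  also have "\<dots> = r powr 1 * r powr (q-1)" by (rule powr_add)
  finally show ?thesis using r by simp
qed

lemma tg_Y:
  assumes q: "0 < q" "q < 1" and r: "r > 0" and s: "s \<ge> 0"
  shows "s powr q \<le> tg q r s"
proof (cases "s = 0")
  case True then show ?thesis using q r by (simp add: tg_def)
next
  case False
  hence sp: "s > 0" using s by simp
  have Yo: "s powr q * r powr (1 - q) \<le> q * s + (1 - q) * r"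
    using Youngs_inequality_0[of q "1-q" s r] q sp r by simp
  have rr: "r powr (1-q) * r powr (q-1) = 1"
  proof -
    have "r powr (1-q) * r powr (q-1) = r powr ((1-q) + (q-1))" by (rule powr_add[symmetric])
    thus ?thesis using r by simp
  qed
  have pos: "r powr (q-1) \<ge> 0" by simp
  have "s powr q = s powr q * (r powr (1-q) * r powr (q-1))" using rr by simp
  also have "\<dots> = (s powr q * r powr (1-q)) * r powr (q-1)" by (simp only: mult.assoc)
  also have "\<dots> \<le> (q* s + (1-q)*r) * r powr (q-1)" using Yo pos by (rule mult_right_mono)
  also have "\<dots> = q* s*r powr (q-1) + (1-q)*(r * r powr (q-1))" by (simp only: distrib_right mult.assoc)
  also have "\<dots> = tg q r s" unfolding tg_def by (simp only: powr_q_split[OF r, of q, symmetric])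
  finally show ?thesis .
qed

lemma tg_M:
  assumes q: "0 < q" "q < 1" and "0 \<le> s" "s \<le> r1" "r1 \<le> r2" "0 < r1"
  shows "tg q r1 s \<le> tg q r2 s"
proof -
  have r2: "r2 > 0" using assms by simp
  have Y: "r1 powr q \<le> tg q r2 r1" using tg_Y[OF q r2, of r1] assms by simp
  have e1: "r1 powr q = r1 * r1 powr (q-1)" using assms by (intro powr_q_split) simp
  have m: "r2 powr (q-1) \<le> r1 powr (q-1)"
    using assms by (intro powr_mono2') auto
  have "0 \<le> q * ((r1 - s) * (r1 powr (q-1) - r2 powr (q-1)))"
    using assms m by (intro mult_nonneg_nonneg) auto
  hence A: "0 \<le> q*r1*r1 powr (q-1) - q*r1*r2 powr (q-1) - q* s*r1 powr (q-1) + q* s*r2 powr (q-1)"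
    by (simp only: right_diff_distrib left_diff_distrib mult.assoc)
  have h: "q * r1 * r1 powr (q-1) = q * r1 powr q" using e1 by simp
  have t1: "tg q r1 s = r1 powr q - q * r1 powr q + q * s * r1 powr (q-1)" by (simp add: tg_def algebra_simps)
  have t2: "tg q r2 s = r2 powr q - q * r2 powr q + q * s * r2 powr (q-1)" by (simp add: tg_def algebra_simps)
  have t3: "tg q r2 r1 = r2 powr q - q * r2 powr q + q * r1 * r2 powr (q-1)" by (simp add: tg_def algebra_simps)
  show ?thesis using Y A h t1 t2 t3 by linarith
qed

lemma psi_eq:
  assumes "\<epsilon> > 0"
  shows "psi p \<epsilon> t = (if t < \<epsilon>\<^sup>2 then tg (p/2) (\<epsilon>\<^sup>2) t else t powr (p/2))"
proof -
  have a: "(\<epsilon>\<^sup>2) powr (p/2) = \<epsilon> powr p" using assms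
    by (simp add: powr_powr flip: powr_numeral)
  have b: "(\<epsilon>\<^sup>2) powr (p/2 - 1) = 1 / \<epsilon> powr (2 - p)" using assms
    by (simp add: powr_powr powr_minus_divide flip: powr_numeral) (simp add: algebra_simps powr_diff)
  show ?thesis unfolding psi_def tg_def a b by simp
qed

lemma dpsi_eq:
  assumes "\<epsilon> > 0"
  shows "dpsi p \<epsilon> t = p/2 * (if t < \<epsilon>\<^sup>2 then (\<epsilon>\<^sup>2) powr (p/2 - 1) else t powr (p/2 - 1))"
proof -
  have b: "(\<epsilon>\<^sup>2) powr (p/2 - 1) = \<epsilon> powr (p - 2)" using assms
    by (simp add: powr_powr flip: powr_numeral)
  show ?thesis unfolding dpsi_def b by (simp add: diff_divide_distrib)
qed


lemma tg_line: "tg q r t + q * r powr (q-1) * (s - t) = tg q r s"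
  by (simp add: tg_def algebra_simps)

lemma tg_self: "t > 0 \<Longrightarrow> t powr q + q * t powr (q-1) * (s - t) = tg q t s"
proof -
  assume t: "t > 0"
  have "t powr q = t * t powr (q-1)" using t by (rule powr_q_split)
  thus ?thesis by (simp add: tg_def algebra_simps)
qed

lemma psi_tangent:
  assumes e: "\<epsilon> > 0" and p: "0 < p" "p < 1" and s: "s \<ge> 0" and t: "t \<ge> 0"
  shows "psi p \<epsilon> s \<le> psi p \<epsilon> t + dpsi p \<epsilon> t * (s - t)"
proof -
  have q: "0 < p/2" "p/2 < 1" using p by auto
  have r: "\<epsilon>\<^sup>2 > 0" using e by simp
  show ?thesis
  proof (cases "t < \<epsilon>\<^sup>2")
    case True
    hence R: "psi p \<epsilon> t + dpsi p \<epsilon> t * (s - t) = tg (p/2) (\<epsilon>\<^sup>2) s"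
      using tg_line[of "p/2" "\<epsilon>\<^sup>2" t s] by (simp add: psi_eq[OF e] dpsi_eq[OF e])
    show ?thesis
    proof (cases "s < \<epsilon>\<^sup>2")
      case True thus ?thesis using R by (simp add: psi_eq[OF e])
    next
      case False thus ?thesis using R tg_Y[OF q r s] by (simp add: psi_eq[OF e])
    qed
  next
    case False
    hence tp: "t > 0" using r by linarith
    hence R: "psi p \<epsilon> t + dpsi p \<epsilon> t * (s - t) = tg (p/2) t s"
      using tg_self[OF tp, of "p/2" s] False by (simp add: psi_eq[OF e] dpsi_eq[OF e])
    show ?thesis
    proof (cases "s < \<epsilon>\<^sup>2")
      case True thus ?thesis using R tg_M[OF q s, of "\<epsilon>\<^sup>2" t] False r
        by (simp add: psi_eq[OF e])
    next
      case False thus ?thesis using R tg_Y[OF q tp s] by (simp add: psi_eq[OF e])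
    qed
  qed
qed

lemma psi_mono:
  assumes e: "0 < e1" "e1 \<le> e2" and p: "0 < p" "p < 1" and t: "t \<ge> 0"
  shows "psi p e1 t \<le> psi p e2 t"
proof -
  have e2: "e2 > 0" using e by simp
  have q: "0 < p/2" "p/2 < 1" using p by auto
  have r: "e1\<^sup>2 > 0" "e2\<^sup>2 > 0" using e by auto
  have le: "e1\<^sup>2 \<le> e2\<^sup>2" using e by (simp add: power_mono)
  show ?thesis
  proof (cases "t < e1\<^sup>2")
    case True
    thus ?thesis using tg_M[OF q t, of "e1\<^sup>2" "e2\<^sup>2"] le r
      by (simp add: psi_eq[OF e(1)] psi_eq[OF e2])
  next
    case False
    show ?thesis
    proof (cases "t < e2\<^sup>2")
      case True thus ?thesis using False tg_Y[OF q r(2) t]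
        by (simp add: psi_eq[OF e(1)] psi_eq[OF e2])
    next
      case False2: False thus ?thesis using False by (simp add: psi_eq[OF e(1)] psi_eq[OF e2])
    qed
  qed
qed

lemma tg_nonneg: "0 \<le> q \<Longrightarrow> q \<le> 1 \<Longrightarrow> 0 \<le> s \<Longrightarrow> 0 \<le> tg q r s"
  unfolding tg_def by (intro add_nonneg_nonneg mult_nonneg_nonneg) auto

lemma psi_nonneg:
  assumes e: "\<epsilon> > 0" and p: "0 < p" "p < 1" and t: "t \<ge> 0"
  shows "0 \<le> psi p \<epsilon> t"
  using tg_nonneg[of "p/2" t "\<epsilon>\<^sup>2"] p t by (simp add: psi_eq[OF e])

lemma psi_le:
  assumes e: "\<epsilon> > 0" and p: "0 < p" "p < 1" and t: "t \<ge> 0"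
  shows "psi p \<epsilon> t \<le> tg (p/2) (\<epsilon>\<^sup>2) t"
proof -
  have q: "0 < p/2" "p/2 < 1" using p by auto
  have r: "\<epsilon>\<^sup>2 > 0" using e by simp
  show ?thesis using tg_Y[OF q r t] by (simp add: psi_eq[OF e])
qed

lemma dpsi_nonneg: "0 < p \<Longrightarrow> 0 \<le> dpsi p \<epsilon> t"
  unfolding dpsi_def by simp

lemma dpsi_le:
  assumes e: "\<epsilon> > 0" and p: "0 < p" "p < 1" and t: "t \<ge> 0"
  shows "dpsi p \<epsilon> t \<le> p/2 * (\<epsilon>\<^sup>2) powr (p/2 - 1)"
proof -
  have "\<not> t < \<epsilon>\<^sup>2 \<Longrightarrow> t powr (p/2 - 1) \<le> (\<epsilon>\<^sup>2) powr (p/2 - 1)"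
    using p e by (intro powr_mono2') auto
  thus ?thesis using p by (auto simp add: dpsi_eq[OF e])
qed


lemma integrable_cfg:
  fixes M :: "'a measure" and f g c :: "'a \<Rightarrow> real"
  assumes f: "f \<in> borel_measurable M" "integrable M (\<lambda>x. (f x)\<^sup>2)"
    and g: "g \<in> borel_measurable M" "integrable M (\<lambda>x. (g x)\<^sup>2)"
    and c: "c \<in> borel_measurable M" "\<And>x. \<bar>c x\<bar> \<le> C"
  shows "integrable M (\<lambda>x. c x * f x * g x)"
proof (rule Bochner_Integration.integrable_bound[where f="\<lambda>x. C * ((f x)\<^sup>2 + (g x)\<^sup>2)"])
  show "integrable M (\<lambda>x. C * ((f x)\<^sup>2 + (g x)\<^sup>2))"
    using f g by (intro integrable_mult_right Bochner_Integration.integrable_add)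
  show "(\<lambda>x. c x * f x * g x) \<in> borel_measurable M" using f g c by measurable
  show "AE x in M. norm (c x * f x * g x) \<le> norm (C * ((f x)\<^sup>2 + (g x)\<^sup>2))"
  proof (intro AE_I2)
    fix x
    have C0: "C \<ge> 0" using c(2)[of x] by linarith
    have fg: "\<bar>f x * g x\<bar> \<le> (f x)\<^sup>2 + (g x)\<^sup>2"
    proof -
      have "0 \<le> (\<bar>f x\<bar> - \<bar>g x\<bar>)\<^sup>2" by simp
      also have "\<dots> = (f x)\<^sup>2 + (g x)\<^sup>2 - 2 * \<bar>f x * g x\<bar>"
        by (simp add: power2_diff abs_mult)
      finally show ?thesis by simp
    qed
    have "\<bar>c x * f x * g x\<bar> = \<bar>c x\<bar> * \<bar>f x * g x\<bar>" by (simp add: abs_mult)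
    also have "\<dots> \<le> C * ((f x)\<^sup>2 + (g x)\<^sup>2)"
      using c(2)[of x] fg by (intro mult_mono) auto
    finally show "norm (c x * f x * g x) \<le> norm (C * ((f x)\<^sup>2 + (g x)\<^sup>2))"
      using C0 by simp
  qed
qed

lemma meas_dpsi: assumes [measurable]: "f \<in> borel_measurable M" shows "(\<lambda>x. dpsi p e ((f x)\<^sup>2)) \<in> borel_measurable M"
  unfolding dpsi_def by measurable

lemma meas_psi: assumes [measurable]: "f \<in> borel_measurable M" shows "(\<lambda>x. psi p e ((f x)\<^sup>2)) \<in> borel_measurable M"
  unfolding psi_def by measurable


lemma int_psi:
  fixes M :: "'a measure" and f :: "'a \<Rightarrow> real"
  assumes fin: "finite_measure M" and f: "f \<in> borel_measurable M" "integrable M (\<lambda>x. (f x)\<^sup>2)"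
    and e: "e > 0" and p: "0 < p" "p < 1"
  shows "integrable M (\<lambda>x. psi p e ((f x)\<^sup>2))"
proof (rule Bochner_Integration.integrable_bound[where f="\<lambda>x. tg (p/2) (e\<^sup>2) ((f x)\<^sup>2)"])
  show "integrable M (\<lambda>x. tg (p/2) (e\<^sup>2) ((f x)\<^sup>2))"
    unfolding tg_def using f fin
    by (intro Bochner_Integration.integrable_add finite_measure.integrable_const integrable_mult_right integrable_mult_left) auto
  show "(\<lambda>x. psi p e ((f x)\<^sup>2)) \<in> borel_measurable M" by (rule meas_psi[OF f(1)])
  show "AE x in M. norm (psi p e ((f x)\<^sup>2)) \<le> norm (tg (p/2) (e\<^sup>2) ((f x)\<^sup>2))"
  proof (intro AE_I2)
    fix x
    have t0: "0 \<le> (f x)\<^sup>2" by simp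
    have "psi p e ((f x)\<^sup>2) \<le> tg (p/2) (e\<^sup>2) ((f x)\<^sup>2)" using psi_le[OF e p t0] .
    moreover have "0 \<le> psi p e ((f x)\<^sup>2)" using psi_nonneg[OF e p t0] .
    moreover have "0 \<le> tg (p/2) (e\<^sup>2) ((f x)\<^sup>2)" using tg_nonneg[of "p/2" "(f x)\<^sup>2" "e\<^sup>2"] p t0 by simp
    ultimately show "norm (psi p e ((f x)\<^sup>2)) \<le> norm (tg (p/2) (e\<^sup>2) ((f x)\<^sup>2))" by simp
  qed
qed

lemma step:
  fixes \<Omega> :: "'d::euclidean_space set"
    and E :: "'v::real_inner \<Rightarrow> 'd \<Rightarrow> real"
    and F :: "'v \<Rightarrow> real" and F' :: "'v \<Rightarrow> ('v \<Rightarrow>\<^sub>L real)"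
  assumes meas: "\<And>u. E u \<in> borel_measurable (lebesgue_on \<Omega>)"
    and sqi: "\<And>u. integrable (lebesgue_on \<Omega>) (\<lambda>x. (E u x)\<^sup>2)"
    and lin: "\<And>a b u v x. E (a *\<^sub>R u + b *\<^sub>R v) x = a * E u x + b * E v x"
    and fin: "finite_measure (lebesgue_on \<Omega>)"
    and e: "e > 0" and p: "0 < p" "p < 1" and bp: "\<beta> > 0"
    and mini: "\<And>v. Qobj \<Omega> E F F' \<alpha> \<beta> p e L a b \<le> Qobj \<Omega> E F F' \<alpha> \<beta> p e L a v"
    and desc: "descent_cond F F' L a b"
  shows "\<alpha> / 2 * (norm (b - a))\<^sup>2 + \<beta> * integral\<^sup>L (lebesgue_on \<Omega>)
            (\<lambda>x. dpsi p e ((E a x)\<^sup>2) * (E b x - E a x)\<^sup>2)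
         \<le> (F a + \<alpha> / 2 * (norm a)\<^sup>2 + \<beta> * integral\<^sup>L (lebesgue_on \<Omega>) (\<lambda>x. psi p e ((E a x)\<^sup>2)))
           - (F b + \<alpha> / 2 * (norm b)\<^sup>2 + \<beta> * integral\<^sup>L (lebesgue_on \<Omega>) (\<lambda>x. psi p e ((E b x)\<^sup>2)))"
proof -
  define \<mu> where "\<mu> = lebesgue_on \<Omega>"
  define h where "h = a - b"
  define g where "g x = dpsi p e ((E a x)\<^sup>2)" for x
  define P where "P x = psi p e ((E a x)\<^sup>2)" for x
  define Cg where "Cg = p/2 * (e\<^sup>2) powr (p/2 - 1)"
  have Eh: "E h x = E a x - E b x" for x
    using lin[of 1 a "-1" b x] by (simp add: h_def)
  have Ev: "E (b + t *\<^sub>R h) x = E b x + t * E h x" for t x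
    using lin[of 1 b t h x] by simp
  have ah: "b + h = a" by (simp add: h_def)
  have gm: "g \<in> borel_measurable \<mu>" unfolding g_def \<mu>_def by (rule meas_dpsi[OF meas])
  have gb: "\<bar>g x\<bar> \<le> Cg" for x
    using dpsi_nonneg[OF p(1)] dpsi_le[OF e p] unfolding g_def Cg_def by auto
  have gfg: "integrable \<mu> (\<lambda>x. g x * E v x * E w x)" for v w
    unfolding \<mu>_def using integrable_cfg[OF meas sqi meas sqi gm[unfolded \<mu>_def] gb] .
  have Pint: "integrable \<mu> P" unfolding P_def \<mu>_def using int_psi[OF fin meas sqi e p] .
  have psib: "integrable \<mu> (\<lambda>x. psi p e ((E b x)\<^sup>2))" unfolding \<mu>_def using int_psi[OF fin meas sqi e p] .
  define X0 where "X0 x = P x + g x * E b x * E b x - g x * E a x * E a x" for x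
  have X0int: "integrable \<mu> X0" unfolding X0_def using Pint gfg
    by (intro Bochner_Integration.integrable_add Bochner_Integration.integrable_diff) auto
  define I0 where "I0 = integral\<^sup>L \<mu> X0"
  define J where "J = integral\<^sup>L \<mu> (\<lambda>x. g x * E b x * E h x)"
  define K where "K = integral\<^sup>L \<mu> (\<lambda>x. g x * E h x * E h x)"
  have Iv: "integral\<^sup>L \<mu> (\<lambda>x. psi p e ((E a x)\<^sup>2) + dpsi p e ((E a x)\<^sup>2) * ((E (b + t *\<^sub>R h) x)\<^sup>2 - (E a x)\<^sup>2))
        = I0 + t * (2 * J) + t\<^sup>2 * K" for t
  proof -
    have "(\<lambda>x. psi p e ((E a x)\<^sup>2) + dpsi p e ((E a x)\<^sup>2) * ((E (b + t *\<^sub>R h) x)\<^sup>2 - (E a x)\<^sup>2))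
        = (\<lambda>x. X0 x + (t * 2) * (g x * E b x * E h x) + t\<^sup>2 * (g x * E h x * E h x))"
      by (rule ext) (simp add: Ev X0_def P_def g_def power2_eq_square algebra_simps)
    moreover have "integral\<^sup>L \<mu> (\<lambda>x. X0 x + (t * 2) * (g x * E b x * E h x) + t\<^sup>2 * (g x * E h x * E h x))
        = I0 + (t * 2) * J + t\<^sup>2 * K"
      unfolding I0_def J_def K_def using X0int gfg
      by (simp add: Bochner_Integration.integral_add Bochner_Integration.integrable_add)
    ultimately show ?thesis by simp
  qed
  have nb: "(norm (b + t *\<^sub>R h))\<^sup>2 = (norm b)\<^sup>2 + 2 * t * inner b h + t\<^sup>2 * (norm h)\<^sup>2" for t
  proof -
    have "(norm (b + t *\<^sub>R h))\<^sup>2 = inner (b + t *\<^sub>R h) (b + t *\<^sub>R h)" by (rule power2_norm_eq_inner)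
    also have "\<dots> = inner b b + 2 * t * inner b h + t\<^sup>2 * inner h h"
      by (simp add: inner_add_left inner_add_right inner_commute power2_eq_square algebra_simps)
    finally show ?thesis by (simp add: power2_norm_eq_inner)
  qed
  have dv: "b + t *\<^sub>R h - a = (t - 1) *\<^sub>R h" for t
    by (simp add: h_def algebra_simps)
  have nd: "(norm (b + t *\<^sub>R h - a))\<^sup>2 = (t - 1)\<^sup>2 * (norm h)\<^sup>2" for t
    unfolding dv by (simp add: power_mult_distrib)
  define A0 where "A0 = F a - blinfun_apply (F' a) h + L / 2 * (norm h)\<^sup>2 + \<alpha> / 2 * (norm b)\<^sup>2 + \<beta> * I0"
  define A1 where "A1 = blinfun_apply (F' a) h - L * (norm h)\<^sup>2 + \<alpha> * inner b h + 2 * \<beta> * J"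
  define A2 where "A2 = (L + \<alpha>) / 2 * (norm h)\<^sup>2 + \<beta> * K"
  have Qv: "Qobj \<Omega> E F F' \<alpha> \<beta> p e L a (b + t *\<^sub>R h) = A0 + A1 * t + A2 * t\<^sup>2" for t
  proof -
    have "Qobj \<Omega> E F F' \<alpha> \<beta> p e L a (b + t *\<^sub>R h) =
       F a + (t - 1) * blinfun_apply (F' a) h + L / 2 * ((t - 1)\<^sup>2 * (norm h)\<^sup>2)
       + \<alpha> / 2 * ((norm b)\<^sup>2 + 2 * t * inner b h + t\<^sup>2 * (norm h)\<^sup>2) + \<beta> * (I0 + t * (2 * J) + t\<^sup>2 * K)"
      unfolding Qobj_def Iv[unfolded \<mu>_def] nb nd unfolding dv blinfun.scaleR_right by simp
    thus ?thesis unfolding A0_def A1_def A2_def by (simp add: power2_eq_square algebra_simps)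
  qed
  have Q0: "Qobj \<Omega> E F F' \<alpha> \<beta> p e L a b = A0" using Qv[of 0] by simp
  have Q1: "Qobj \<Omega> E F F' \<alpha> \<beta> p e L a a = A0 + A1 + A2" using Qv[of 1] ah by simp
  have A1pos: "A1 \<ge> 0"
  proof (rule ccontr)
    assume neg: "\<not> A1 \<ge> 0"
    define t where "t = - A1 / (2 * (\<bar>A2\<bar> + 1))"
    have d: "2 * (\<bar>A2\<bar> + 1) > 0" by simp
    have tp: "t > 0" using neg d unfolding t_def by (intro divide_pos_pos) auto
    have "A0 \<le> A0 + A1 * t + A2 * t\<^sup>2" using mini[of "b + t *\<^sub>R h"] Q0 Qv[of t] by simp
    hence "0 \<le> t * (A1 + A2 * t)" by (simp add: power2_eq_square algebra_simps)
    hence c: "0 \<le> A1 + A2 * t" using tp by (simp add: zero_le_mult_iff)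
    have "A2 * t \<le> \<bar>A2\<bar> * t" using tp by (intro mult_right_mono) auto
    also have "\<bar>A2\<bar> * t = - A1 * (\<bar>A2\<bar> / (2 * (\<bar>A2\<bar> + 1)))" unfolding t_def by simp
    also have "\<dots> < - A1 * (1/2)"
      using neg by (intro mult_strict_left_mono) (auto simp: field_simps)
    finally show False using c neg by linarith
  qed
  have Qa: "Qobj \<Omega> E F F' \<alpha> \<beta> p e L a a
      = F a + \<alpha> / 2 * (norm a)\<^sup>2 + \<beta> * integral\<^sup>L (lebesgue_on \<Omega>) (\<lambda>x. psi p e ((E a x)\<^sup>2))"
    unfolding Qobj_def by simp
  have Ib: "integral\<^sup>L \<mu> (\<lambda>x. psi p e ((E b x)\<^sup>2))
     \<le> integral\<^sup>L \<mu> (\<lambda>x. psi p e ((E a x)\<^sup>2) + dpsi p e ((E a x)\<^sup>2) * ((E b x)\<^sup>2 - (E a x)\<^sup>2))"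
  proof (rule integral_mono)
    have "(\<lambda>x. psi p e ((E a x)\<^sup>2) + dpsi p e ((E a x)\<^sup>2) * ((E b x)\<^sup>2 - (E a x)\<^sup>2)) = X0"
      by (rule ext) (simp add: X0_def P_def g_def power2_eq_square algebra_simps)
    thus "integrable \<mu> (\<lambda>x. psi p e ((E a x)\<^sup>2) + dpsi p e ((E a x)\<^sup>2) * ((E b x)\<^sup>2 - (E a x)\<^sup>2))"
      using X0int by simp
    show "integrable \<mu> (\<lambda>x. psi p e ((E b x)\<^sup>2))" by (rule psib)
    show "psi p e ((E b x)\<^sup>2) \<le> psi p e ((E a x)\<^sup>2) + dpsi p e ((E a x)\<^sup>2) * ((E b x)\<^sup>2 - (E a x)\<^sup>2)" for x
      by (rule psi_tangent[OF e p]) auto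
  qed
  have Qb: "F b + \<alpha> / 2 * (norm b)\<^sup>2 + \<beta> * integral\<^sup>L (lebesgue_on \<Omega>) (\<lambda>x. psi p e ((E b x)\<^sup>2))
      \<le> Qobj \<Omega> E F F' \<alpha> \<beta> p e L a b + L / 2 * (norm h)\<^sup>2"
  proof -
    have "norm (b - a) = norm h" unfolding h_def by (rule norm_minus_commute)
    moreover have "\<beta> * integral\<^sup>L \<mu> (\<lambda>x. psi p e ((E b x)\<^sup>2))
     \<le> \<beta> * integral\<^sup>L \<mu> (\<lambda>x. psi p e ((E a x)\<^sup>2) + dpsi p e ((E a x)\<^sup>2) * ((E b x)\<^sup>2 - (E a x)\<^sup>2))"
      using Ib bp by (intro mult_left_mono) auto
    ultimately show ?thesis using desc unfolding Qobj_def descent_cond_def \<mu>_def by simp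
  qed
  have Kd: "integral\<^sup>L (lebesgue_on \<Omega>) (\<lambda>x. dpsi p e ((E a x)\<^sup>2) * (E b x - E a x)\<^sup>2) = K"
    unfolding K_def \<mu>_def g_def Eh by (rule Bochner_Integration.integral_cong) (simp_all add: power2_eq_square algebra_simps)
  have nrm: "norm (b - a) = norm h" unfolding h_def by (rule norm_minus_commute)
  have X: "Qobj \<Omega> E F F' \<alpha> \<beta> p e L a a - Qobj \<Omega> E F F' \<alpha> \<beta> p e L a b \<ge> A2"
    using Q0 Q1 A1pos by linarith
  have Y: "A2 = \<alpha> / 2 * (norm h)\<^sup>2 + \<beta> * K + L / 2 * (norm h)\<^sup>2" unfolding A2_def by (simp add: algebra_simps)
  show ?thesis unfolding nrm Kd using X Y Qa Qb by linarith
qed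


lemma quad_lb: fixes \<alpha> x N :: real assumes "\<alpha> > 0" shows "\<alpha> / 2 * x\<^sup>2 - N * x \<ge> - N\<^sup>2 / (2 * \<alpha>)"
proof -
  have "0 \<le> (\<alpha> * x - N)\<^sup>2 / (2 * \<alpha>)" using assms by simp
  also have "\<dots> = \<alpha> / 2 * x\<^sup>2 - N * x + N\<^sup>2 / (2 * \<alpha>)"
    using assms by (simp add: power2_diff field_simps power2_eq_square)
  finally show ?thesis by simp
qed

theorem corollary7p6:
  fixes \<Omega> :: "'d::euclidean_space set"
    and E :: "'v::{real_inner,complete_space} \<Rightarrow> 'd \<Rightarrow> real"
    and F :: "'v \<Rightarrow> real" and F' :: "'v \<Rightarrow> ('v \<Rightarrow>\<^sub>L real)"
    and \<alpha> \<beta> p \<gamma> Lt :: real and eps L :: "nat \<Rightarrow> real" and u :: "nat \<Rightarrow> 'v"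
  assumes "lipschitz_domain \<Omega>"
    and "compact_dense_embedding \<Omega> E"
    and "assumption_I F F'"
    and "\<alpha> > 0" and "\<beta> > 0" and "0 < p" and "p < 1"
    and "generated_by_algA \<Omega> E F F' \<alpha> \<beta> p eps \<gamma> Lt L u"
  shows "summable (\<lambda>k. \<alpha> / 2 * (norm (u (Suc (Suc k)) - u (Suc k)))\<^sup>2
           + \<beta> * integral\<^sup>L (lebesgue_on \<Omega>)
               (\<lambda>x. dpsi p (eps (Suc k)) ((E (u (Suc k)) x)\<^sup>2) * (E (u (Suc (Suc k))) x - E (u (Suc k)) x)\<^sup>2))"
proof -
  note ap = assms(4) and bp = assms(5) and p = assms(6,7)
  have meas: "\<And>u. E u \<in> borel_measurable (lebesgue_on \<Omega>)"
    and sqi: "\<And>u. integrable (lebesgue_on \<Omega>) (\<lambda>x. (E u x)\<^sup>2)"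
    and lin: "\<And>a b u v x. E (a *\<^sub>R u + b *\<^sub>R v) x = a * E u x + b * E v x"
    using assms(2) unfolding compact_dense_embedding_def square_int_def by auto
  have fin: "finite_measure (lebesgue_on \<Omega>)"
    using assms(1) unfolding lipschitz_domain_def
    by (intro finite_measure_lebesgue_on lmeasurable_open) auto
  obtain lf :: "'v \<Rightarrow>\<^sub>L real" and c where lfc: "\<And>u. F u \<ge> blinfun_apply lf u + c"
    using assms(3) unfolding assumption_I_def by blast
  have dec: "decseq eps" and epos: "\<And>k. eps k > 0"
    and mini: "\<And>k v. Qobj \<Omega> E F F' \<alpha> \<beta> p (eps k) (L k) (u k) (u (Suc k))
                \<le> Qobj \<Omega> E F F' \<alpha> \<beta> p (eps k) (L k) (u k) v"
    and desc: "\<And>k. descent_cond F F' (L k) (u k) (u (Suc k))"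
    using assms(8) unfolding generated_by_algA_def by auto
  define Ph where "Ph e v = F v + \<alpha> / 2 * (norm v)\<^sup>2 + \<beta> * integral\<^sup>L (lebesgue_on \<Omega>) (\<lambda>x. psi p e ((E v x)\<^sup>2))" for e v
  define \<Phi> where "\<Phi> k = Ph (eps k) (u k)" for k
  define T where "T k = \<alpha> / 2 * (norm (u (Suc (Suc k)) - u (Suc k)))\<^sup>2
           + \<beta> * integral\<^sup>L (lebesgue_on \<Omega>)
               (\<lambda>x. dpsi p (eps (Suc k)) ((E (u (Suc k)) x)\<^sup>2) * (E (u (Suc (Suc k))) x - E (u (Suc k)) x)\<^sup>2)" for k
  define m where "m = c - (norm lf)\<^sup>2 / (2 * \<alpha>)"
  have lb: "Ph e v \<ge> m" if e: "e > 0" for e v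
  proof -
    have "- (norm lf * norm v) \<le> blinfun_apply lf v"
      using norm_blinfun[of lf v] by auto
    hence "F v \<ge> c - norm lf * norm v" using lfc[of v] by linarith
    moreover have "\<alpha> / 2 * (norm v)\<^sup>2 - norm lf * norm v \<ge> - (norm lf)\<^sup>2 / (2 * \<alpha>)"
      by (rule quad_lb[OF ap])
    moreover have "0 \<le> integral\<^sup>L (lebesgue_on \<Omega>) (\<lambda>x. psi p e ((E v x)\<^sup>2))"
      by (intro integral_nonneg_AE AE_I2 psi_nonneg[OF e p]) auto
    hence "0 \<le> \<beta> * integral\<^sup>L (lebesgue_on \<Omega>) (\<lambda>x. psi p e ((E v x)\<^sup>2))" using bp by simp
    ultimately show ?thesis unfolding Ph_def m_def by linarith
  qed
  have Tnn: "T k \<ge> 0" for k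
  proof -
    have "0 \<le> integral\<^sup>L (lebesgue_on \<Omega>)
               (\<lambda>x. dpsi p (eps (Suc k)) ((E (u (Suc k)) x)\<^sup>2) * (E (u (Suc (Suc k))) x - E (u (Suc k)) x)\<^sup>2)"
      using dpsi_nonneg[OF p(1)] by (intro integral_nonneg_AE AE_I2) auto
    thus ?thesis unfolding T_def using ap bp by simp
  qed
  have Tle: "T k \<le> \<Phi> (Suc k) - \<Phi> (Suc (Suc k))" for k
  proof -
    have s: "T k \<le> \<Phi> (Suc k) - Ph (eps (Suc k)) (u (Suc (Suc k)))"
      unfolding T_def \<Phi>_def Ph_def
      by (rule step[OF meas sqi lin fin epos p bp mini desc])
    have le: "eps (Suc (Suc k)) \<le> eps (Suc k)" using dec by (rule decseq_SucD)
    have "integral\<^sup>L (lebesgue_on \<Omega>) (\<lambda>x. psi p (eps (Suc (Suc k))) ((E (u (Suc (Suc k))) x)\<^sup>2))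
        \<le> integral\<^sup>L (lebesgue_on \<Omega>) (\<lambda>x. psi p (eps (Suc k)) ((E (u (Suc (Suc k))) x)\<^sup>2))"
      by (intro integral_mono int_psi[OF fin meas sqi epos p] psi_mono[OF epos le p]) auto
    hence "\<Phi> (Suc (Suc k)) \<le> Ph (eps (Suc k)) (u (Suc (Suc k)))"
      unfolding \<Phi>_def Ph_def using bp by simp
    thus ?thesis using s by linarith
  qed
  have partial: "(\<Sum>k\<le>n. T k) \<le> \<Phi> 1 - \<Phi> (Suc (Suc n))" for n
  proof (induction n)
    case 0 thus ?case using Tle[of 0] by simp
  next
    case (Suc n) thus ?case using Tle[of "Suc n"] by simp
  qed
  have "(\<Sum>k\<le>n. T k) \<le> \<Phi> 1 - m" for n
    using partial[of n] lb[OF epos, of "Suc (Suc n)" "u (Suc (Suc n))"] unfolding \<Phi>_def by linarith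
  hence "summable T" using Tnn by (intro bounded_imp_summable) auto
  thus ?thesis unfolding T_def .
qed

end
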